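(* Let $\alpha_1,\ldots,\alpha_m\in(0,1)$ with $\sum_{i=1}^m\alpha_i=1$, let $f:[0,1]^m\to\mathbb{C}$ be integrable with generalized Walsh expansion $f=\sum_{S\subseteq[m]}F_S$, and fix $1\le k\le m$. Suppose that for every $S\subseteq[m]$ with $|S|=k$: (a) if $k\ge 2$, $F_S$ is alternating with respect to the coordinates in $S$; and (b) if $k\le m-1$, then for every $\ell\in[m]\setminus S$, $$\frac{1}{\prod_{i\in S}\alpha_i}F_S(x)=\sum_{i\in S}\frac{1}{\prod_{j\in S_i}\alpha_j}F_{S_i}(x^{(i)})$$ for almost every $x$, where $S_i=(S\cup\{\ell\})\setminus\{i\}$ and $x^{(i)}$ is $x$ with coordinates $x_\ell$ and $x_i$ swapped. Then for every $\alpha$-partition $A_1,\ldots,A_m$ of $[0,1]$, $$\int_{A_1\times\cdots\times A_m} f^{=k} = 0,\qquad\text{where } f^{=k}:=\sum_{S\subseteq[m],\,|S|=k}F_S.$$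
   Context: $[m]=\{1,\ldots,m\}$, $\lambda$ is Lebesgue measure. For $x\in[0,1]^m$ and $S\subseteq[m]$, $x_S$ is the restriction of $x$ to coordinates in $S$; functions on $[0,1]^S$ are identified with their extensions $x\mapsto g(x_S)$ to $[0,1]^m$. The generalized Walsh expansion of an integrable $f:[0,1]^m\to\mathbb{C}$ is the unique expansion $f=\sum_{S\subseteq[m]}F_S$ such that each $F_S$ depends only on the coordinates in $S$ and $\int_0^1 F_S\,dx_i=0$ for every $i\in S$. A function is alternating with respect to the coordinates in $S$ if interchanging any two coordinates in $S$ changes its sign. Given $\alpha=(\alpha_1,\ldots,\alpha_m)$ with $\sum\alpha_i=1$, an $\alpha$-partition is a partition $A_1,\ldots,A_m$ of $[0,1]$ into measurable sets with $\lambda(A_i)=\alpha_i$ and such that the boundary of each $A_i$ has measure $0$. *)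

theory Defs
  imports "HOL-Analysis.Analysis"
begin

definition unit_lebesgue :: "real measure" where
  "unit_lebesgue = restrict_space lebesgue {0..1}"

text \<open>It is the completion of the product of the one-dimensional
  Lebesgue measures, i.e. m-dimensional Lebesgue measure on [0,1]^m.\<close>
definition cube_lebesgue :: "nat \<Rightarrow> (nat \<Rightarrow> real) measure" where
  "cube_lebesgue m = completion (PiM {1..m} (\<lambda>_. unit_lebesgue))"

definition walsh_expansion ::
  "nat \<Rightarrow> ((nat \<Rightarrow> real) \<Rightarrow> complex) \<Rightarrow> (nat set \<Rightarrow> (nat \<Rightarrow> real) \<Rightarrow> complex) \<Rightarrow> bool" where
  "walsh_expansion m f F \<longleftrightarrow>
     (\<forall>S. S \<subseteq> {1..m} \<longrightarrow> integrable (cube_lebesgue m) (F S)) \<and>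
     (\<forall>S. S \<subseteq> {1..m} \<longrightarrow> (\<forall>x\<in>space (cube_lebesgue m). \<forall>y\<in>space (cube_lebesgue m).
          (\<forall>i\<in>S. x i = y i) \<longrightarrow> F S x = F S y)) \<and>
     (\<forall>S. S \<subseteq> {1..m} \<longrightarrow> (\<forall>i\<in>S. AE x in cube_lebesgue m.
          integrable unit_lebesgue (\<lambda>t. F S (x(i := t))) \<and>
          integral\<^sup>L unit_lebesgue (\<lambda>t. F S (x(i := t))) = 0)) \<and>
     (AE x in cube_lebesgue m. f x = (\<Sum>S\<in>Pow {1..m}. F S x))"

definition alternating_on :: "nat \<Rightarrow> nat set \<Rightarrow> ((nat \<Rightarrow> real) \<Rightarrow> complex) \<Rightarrow> bool" where
  "alternating_on m S g \<longleftrightarrow>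
     (\<forall>i\<in>S. \<forall>j\<in>S. i \<noteq> j \<longrightarrow> (\<forall>x\<in>space (cube_lebesgue m).
        g (x(i := x j, j := x i)) = - g x))"

definition alpha_partition :: "nat \<Rightarrow> (nat \<Rightarrow> real) \<Rightarrow> (nat \<Rightarrow> real set) \<Rightarrow> bool" where
  "alpha_partition m \<alpha> A \<longleftrightarrow>
     (\<forall>i\<in>{1..m}. A i \<in> sets lebesgue \<and> measure lebesgue (A i) = \<alpha> i
                  \<and> frontier (A i) \<in> null_sets lebesgue) \<and>
     (\<Union>i\<in>{1..m}. A i) = {0..1} \<and>
     (\<forall>i\<in>{1..m}. \<forall>j\<in>{1..m}. i \<noteq> j \<longrightarrow> A i \<inter> A j = {})"

end

theory Submission
  imports Defs "HOL-Probability.Probability"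
begin

lemma U_space[simp]: "space unit_lebesgue = {0..1}"
  by (simp add: unit_lebesgue_def space_restrict_space)

lemma U_sets: "A \<in> sets lebesgue \<Longrightarrow> A \<subseteq> {0..1} \<Longrightarrow> A \<in> sets unit_lebesgue"
  unfolding unit_lebesgue_def sets_restrict_space by auto

lemma U_measure: "A \<in> sets lebesgue \<Longrightarrow> A \<subseteq> {0..1} \<Longrightarrow> measure unit_lebesgue A = measure lebesgue A"
  unfolding unit_lebesgue_def by (simp add: measure_restrict_space)

lemma U_prob: "prob_space unit_lebesgue"
proof
  show "emeasure unit_lebesgue (space unit_lebesgue) = 1"
    unfolding unit_lebesgue_def by (simp add: emeasure_restrict_space space_restrict_space)
qed

interpretation U: prob_space unit_lebesgue by (rule U_prob)

interpretation PU: product_sigma_finite "\<lambda>_. unit_lebesgue"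
  by unfold_locales

lemma P_prob: "prob_space (PiM I (\<lambda>_. unit_lebesgue))"
  by (rule prob_space_PiM) (simp add: U_prob)

lemma cube_def': "cube_lebesgue m = completion (PiM {1..m} (\<lambda>_. unit_lebesgue))"
  by (simp add: cube_lebesgue_def)

lemma measurable_completion_AE:
  assumes g: "g \<in> borel_measurable M" and ae: "AE x in M. f x = g x"
  shows "f \<in> borel_measurable (completion M)"
proof (rule measurableI)
  fix x assume "x \<in> space (completion M)" then show "f x \<in> space borel" by simp
next
  fix B :: "'b set" assume B: "B \<in> sets borel"
  have "g -` B \<inter> space M \<in> sets M" using g B by (simp add: measurable_sets)
  then have A: "g -` B \<inter> space M \<in> sets (completion M)" by simp
  have "AE x in completion M. x \<in> g -` B \<inter> space M \<longleftrightarrow> x \<in> f -` B \<inter> space (completion M)"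
    using AE_completion[OF ae] AE_space[of "completion M"] by eventually_elim auto
  then show "f -` B \<inter> space (completion M) \<in> sets (completion M)"
    by (rule completion.in_sets_AE[OF _ A]) auto
qed

abbreviation PP :: "nat set \<Rightarrow> (nat \<Rightarrow> real) measure" where
  "PP I \<equiv> PiM I (\<lambda>_. unit_lebesgue)"

lemma rep_exists:
  fixes G :: "(nat \<Rightarrow> real) \<Rightarrow> complex"
  assumes "G \<in> borel_measurable (completion M)"
  shows "\<exists>g. g \<in> borel_measurable M \<and> (AE x in M. G x = g x)"
proof -
  have "(\<lambda>x. Re (G x)) \<in> borel_measurable (completion M)" "(\<lambda>x. Im (G x)) \<in> borel_measurable (completion M)"
    using assms by auto
  from this[THEN completion_ex_borel_measurable_real]
  obtain gr gi where gr: "gr \<in> borel_measurable M" "AE x in M. Re (G x) = gr x"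
    and gi: "gi \<in> borel_measurable M" "AE x in M. Im (G x) = gi x" by blast
  show ?thesis
  proof (intro exI conjI)
    show "(\<lambda>x. Complex (gr x) (gi x)) \<in> borel_measurable M"
      using gr gi by (auto intro!: borel_measurable_complex_iff[THEN iffD2])
    show "AE x in M. G x = Complex (gr x) (gi x)"
      using gr(2) gi(2) by eventually_elim (simp add: complex_eq_iff)
  qed
qed

lemma rep_integrable:
  fixes G g :: "_ \<Rightarrow> complex"
  assumes "integrable (completion M) G" "g \<in> borel_measurable M" "AE x in M. G x = g x"
  shows "integrable M g"
proof -
  have "integrable (completion M) g"
    using assms by (intro integrable_cong_AE_imp[OF assms(1)]) (auto simp: AE_completion_iff measurable_completion)
  then show ?thesis using assms(2) integrable_completion by blast
qed

lemma rep_setint: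
  fixes G g :: "_ \<Rightarrow> complex"
  assumes g: "g \<in> borel_measurable M" and ae: "AE x in M. G x = g x" and X: "X \<in> sets M"
  shows "set_lebesgue_integral (completion M) X G = integral\<^sup>L M (\<lambda>x. indicator X x *\<^sub>R g x)"
proof -
  have Gm: "G \<in> borel_measurable (completion M)"
    by (rule measurable_completion_AE[OF g ae])
  have "set_lebesgue_integral (completion M) X G = integral\<^sup>L (completion M) (\<lambda>x. indicator X x *\<^sub>R g x)"
    unfolding set_lebesgue_integral_def
  proof (intro integral_cong_AE)
    show "(\<lambda>x. indicator X x *\<^sub>R G x) \<in> borel_measurable (completion M)"
      using X Gm by (intro borel_measurable_scaleR borel_measurable_indicator) auto
    show "(\<lambda>x. indicator X x *\<^sub>R g x) \<in> borel_measurable (completion M)"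
      using X g by (intro borel_measurable_scaleR borel_measurable_indicator measurable_completion) auto
    show "AE x in completion M. indicator X x *\<^sub>R G x = indicator X x *\<^sub>R g x"
      using ae by (auto simp: AE_completion_iff elim: AE_mp)
  qed
  also have "\<dots> = integral\<^sup>L M (\<lambda>x. indicator X x *\<^sub>R g x)"
    using X g by (intro integral_completion) auto
  finally show ?thesis .
qed

lemma box_sets:
  assumes "\<And>j. j \<in> I \<Longrightarrow> B j \<in> sets unit_lebesgue" "finite I"
  shows "PiE I B \<in> sets (PP I)"
  using assms by (intro sets_PiM_I_finite) auto

lemma upd_in_PiE:
  assumes "i \<notin> I" "x \<in> extensional I"
  shows "(x(i:=t) \<in> PiE (insert i I) (B(i:=D))) \<longleftrightarrow> (x \<in> PiE I B \<and> t \<in> D)"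
proof
  assume a: "x(i:=t) \<in> PiE (insert i I) (B(i:=D))"
  have "t \<in> D" using PiE_mem[OF a, of i] by simp
  moreover have "x \<in> PiE I B"
  proof (rule PiE_I)
    fix j assume "j \<in> I" then show "x j \<in> B j" using PiE_mem[OF a, of j] assms(1) by (auto split: if_splits)
  next
    fix j assume "j \<notin> I" then show "x j = undefined" using assms(2) by (auto simp: extensional_def)
  qed
  ultimately show "x \<in> PiE I B \<and> t \<in> D" by blast
next
  assume "x \<in> PiE I B \<and> t \<in> D"
  then show "x(i:=t) \<in> PiE (insert i I) (B(i:=D))"
    using assms(1) by (intro PiE_I) (auto simp: PiE_def extensional_def Pi_def)
qed

lemma split_integral:
  fixes g :: "_ \<Rightarrow> complex"
  assumes g: "integrable (PP {1..m}) g" and i: "i \<in> {1..m}"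
    and B: "\<And>j. j \<in> {1..m} \<Longrightarrow> B j \<in> sets unit_lebesgue" and D: "D \<in> sets unit_lebesgue"
  shows "integral\<^sup>L (PP {1..m}) (\<lambda>x. indicator (PiE {1..m} (B(i:=D))) x *\<^sub>R g x)
    = (LINT x|PP ({1..m}-{i}). indicator (PiE ({1..m}-{i}) B) x *\<^sub>R
         (LINT t|unit_lebesgue. indicator D t *\<^sub>R g (x(i:=t))))"
proof -
  define I where "I = {1..m} - {i}"
  have ins: "{1..m} = insert i I" using i by (auto simp: I_def)
  have fin: "finite I" "i \<notin> I" by (auto simp: I_def)
  have X: "PiE {1..m} (B(i:=D)) \<in> sets (PP {1..m})"
    using B D by (intro box_sets) auto
  have int: "integrable (PP (insert i I)) (\<lambda>x. indicator (PiE {1..m} (B(i:=D))) x *\<^sub>R g x)"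
    unfolding ins[symmetric] by (rule integrable_mult_indicator[OF X g])
  have "integral\<^sup>L (PP {1..m}) (\<lambda>x. indicator (PiE {1..m} (B(i:=D))) x *\<^sub>R g x)
     = integral\<^sup>L (PP (insert i I)) (\<lambda>x. indicator (PiE {1..m} (B(i:=D))) x *\<^sub>R g x)"
    by (simp only: ins[symmetric])
  also have "\<dots> = (LINT x|PP I. LINT t|unit_lebesgue. indicator (PiE {1..m} (B(i:=D))) (x(i:=t)) *\<^sub>R g (x(i:=t)))"
    by (rule PU.product_integral_insert[OF fin int])
  also have "\<dots> = (LINT x|PP I. indicator (PiE I B) x *\<^sub>R
         (LINT t|unit_lebesgue. indicator D t *\<^sub>R g (x(i:=t))))"
  proof (rule Bochner_Integration.integral_cong[OF refl])
    fix x assume x: "x \<in> space (PP I)"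
    have "(LINT t|unit_lebesgue. indicator (PiE {1..m} (B(i:=D))) (x(i:=t)) *\<^sub>R g (x(i:=t)))
       = (LINT t|unit_lebesgue. indicator (PiE I B) x *\<^sub>R (indicator D t *\<^sub>R g (x(i:=t))))"
    proof (rule Bochner_Integration.integral_cong[OF refl])
      fix t assume t: "t \<in> space unit_lebesgue"
      have "indicator (PiE {1..m} (B(i:=D))) (x(i:=t)) = (indicator (PiE I B) x * indicator D t :: real)"
        using x fin unfolding ins
        using x fin unfolding ins
        by (simp add: indicator_def upd_in_PiE space_PiM PiE_def)
      then show "indicator (PiE {1..m} (B(i:=D))) (x(i:=t)) *\<^sub>R g (x(i:=t))
          = indicator (PiE I B) x *\<^sub>R (indicator D t *\<^sub>R g (x(i:=t)))" by simp
    qed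
    then show "(LINT t|unit_lebesgue. indicator (PiE {1..m} (B(i:=D))) (x(i:=t)) *\<^sub>R g (x(i:=t)))
       = indicator (PiE I B) x *\<^sub>R (LINT t|unit_lebesgue. indicator D t *\<^sub>R g (x(i:=t)))"
      by (metis integral_scaleR_right)
  qed
  finally show ?thesis by (simp add: I_def)
qed

lemma AE_split:
  assumes ae: "AE y in PP {1..m}. R y" and i: "i \<in> {1..m}"
  shows "AE x in PP ({1..m}-{i}). AE t in unit_lebesgue. R (x(i:=t))"
proof -
  define I where "I = {1..m} - {i}"
  have ins: "{1..m} = insert i I" using i by (auto simp: I_def)
  have fin: "finite I" "i \<notin> I" by (auto simp: I_def)
  obtain N where N0: "{y \<in> space (PP {1..m}). \<not> R y} \<subseteq> N" "emeasure (PP {1..m}) N = 0" "N \<in> sets (PP {1..m})"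
    using AE_E[OF ae] by blast
  have Ns: "N \<in> sets (PP (insert i I))" using N0(3) unfolding ins .
  have m0: "(\<lambda>z. indicator N ((\<lambda>(x, t). x(i:=t)) z) :: ennreal) \<in> borel_measurable (PP I \<Otimes>\<^sub>M unit_lebesgue)"
    by (rule measurable_compose[OF measurable_add_dim borel_measurable_indicator[OF Ns]])
  have eq: "(\<lambda>z. indicator N ((\<lambda>(x, t). x(i:=t)) z) :: ennreal) = case_prod (\<lambda>x t. indicator N (x(i:=t)))"
    by (auto simp: fun_eq_iff)
  have m1: "case_prod (\<lambda>x t. indicator N (x(i:=t)) :: ennreal) \<in> borel_measurable (PP I \<Otimes>\<^sub>M unit_lebesgue)"
    using m0 unfolding eq .
  have m2: "(\<lambda>x. \<integral>\<^sup>+ t. indicator N (x(i:=t)) \<partial>unit_lebesgue) \<in> borel_measurable (PP I)"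
    using U.borel_measurable_nn_integral[OF m1] by simp
  have "0 = emeasure (PP {1..m}) N" using N0(2) by simp
  also have "\<dots> = integral\<^sup>N (PP (insert i I)) (indicator N)"
    unfolding ins using Ns by (simp add: nn_integral_indicator)
  also have "\<dots> = (\<integral>\<^sup>+ x. (\<integral>\<^sup>+ t. indicator N (x(i:=t)) \<partial>unit_lebesgue) \<partial>PP I)"
    by (intro PU.product_nn_integral_insert fin borel_measurable_indicator Ns)
  finally have "(\<integral>\<^sup>+ x. (\<integral>\<^sup>+ t. indicator N (x(i:=t)) \<partial>unit_lebesgue) \<partial>PP I) = 0" by simp
  then have "AE x in PP I. (\<integral>\<^sup>+ t. indicator N (x(i:=t)) \<partial>unit_lebesgue) = 0"
    using nn_integral_0_iff_AE[OF m2] by simp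
  then show ?thesis unfolding I_def[symmetric]
  proof (rule AE_mp)
    show "AE x in PP I. (\<integral>\<^sup>+ t. indicator N (x(i:=t)) \<partial>unit_lebesgue) = 0 \<longrightarrow> (AE t in unit_lebesgue. R (x(i:=t)))"
    proof (rule AE_I2, rule impI)
    fix x assume x: "x \<in> space (PP I)" and z: "(\<integral>\<^sup>+ t. indicator N (x(i:=t)) \<partial>unit_lebesgue) = 0"
    have mx: "(\<lambda>t. indicator N (x(i:=t)) :: ennreal) \<in> borel_measurable unit_lebesgue"
      by (rule measurable_compose[OF measurable_component_update[OF x fin(2)] borel_measurable_indicator[OF Ns]])
    have "AE t in unit_lebesgue. (indicator N (x(i:=t)) :: ennreal) = 0"
      using z nn_integral_0_iff_AE[OF mx] by simp
    have sp: "x(i:=t) \<in> space (PP {1..m})" if t: "t \<in> space unit_lebesgue" for t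
    proof -
      have xe: "x \<in> PiE I (\<lambda>_. {0..1})" using x by (simp add: space_PiM)
      have "x(i:=t) \<in> PiE (insert i I) (\<lambda>_. {0..1::real})"
        using xe t fin(2) by (intro PiE_I) (auto simp: PiE_iff extensional_def)
      then show ?thesis unfolding ins by (simp add: space_PiM)
    qed
    have imp: "t \<in> space unit_lebesgue \<Longrightarrow> (indicator N (x(i:=t)) :: ennreal) = 0 \<Longrightarrow> R (x(i:=t))" for t
    proof -
      assume t: "t \<in> space unit_lebesgue" and "(indicator N (x(i:=t)) :: ennreal) = 0"
      then have "x(i:=t) \<notin> N" by (simp add: indicator_def split: if_splits)
      with sp[OF t] N0(1) show "R (x(i:=t))" by blast
    qed
    show "AE t in unit_lebesgue. R (x(i:=t))"
      using \<open>AE t in unit_lebesgue. (indicator N (x(i:=t)) :: ennreal) = 0\<close>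
      by (rule AE_mp) (rule AE_I2, use imp in blast)
  qed
  qed
qed

lemma space_PP_upd:
  assumes x: "x \<in> space (PP ({1..m}-{i}))" and i: "i \<in> {1..m}" and t: "t \<in> {0..1}"
  shows "x(i:=t) \<in> space (PP {1..m})"
proof -
  have ins: "{1..m} = insert i ({1..m}-{i})" using i by auto
  have xe: "x \<in> PiE ({1..m}-{i}) (\<lambda>_. {0..1})" using x by (simp add: space_PiM)
  have "x(i:=t) \<in> PiE (insert i ({1..m}-{i})) (\<lambda>_. {0..1::real})"
    using xe t by (intro PiE_I) (auto simp: PiE_iff extensional_def)
  then show ?thesis by (subst ins) (simp add: space_PiM)
qed

lemma meas_upd:
  fixes g :: "_ \<Rightarrow> 'b::{banach, second_countable_topology}"
  assumes g: "g \<in> borel_measurable (PP {1..m})" and i: "i \<in> {1..m}" and x: "x \<in> space (PP ({1..m}-{i}))"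
  shows "(\<lambda>t. g (x(i:=t))) \<in> borel_measurable unit_lebesgue"
proof -
  have ins: "{1..m} = insert i ({1..m}-{i})" using i by auto
  have g': "g \<in> borel_measurable (PP (insert i ({1..m}-{i})))" using g ins by simp
  show ?thesis
    by (rule measurable_compose[OF measurable_component_update[OF x] g']) simp
qed

lemma meas_slice:
  fixes g :: "_ \<Rightarrow> 'b::{banach, second_countable_topology}"
  assumes g: "g \<in> borel_measurable (PP {1..m})" and i: "i \<in> {1..m}" and D: "D \<in> sets unit_lebesgue"
  shows "(\<lambda>x. LINT t|unit_lebesgue. indicator D t *\<^sub>R g (x(i:=t))) \<in> borel_measurable (PP ({1..m}-{i}))"
proof -
  define I where "I = {1..m} - {i}"
  have ins: "{1..m} = insert i I" using i by (auto simp: I_def)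
  have g': "g \<in> borel_measurable (PP (insert i I))" using g ins by simp
  have m0: "(\<lambda>z. g ((\<lambda>(x, t). x(i:=t)) z)) \<in> borel_measurable (PP I \<Otimes>\<^sub>M unit_lebesgue)"
    by (rule measurable_compose[OF measurable_add_dim g'])
  have m1: "(\<lambda>z. indicator D (snd z) *\<^sub>R g ((\<lambda>(x, t). x(i:=t)) z)) \<in> borel_measurable (PP I \<Otimes>\<^sub>M unit_lebesgue)"
    using m0 D by (intro borel_measurable_scaleR borel_measurable_indicator measurable_compose[OF measurable_snd]) auto
  have eq: "(\<lambda>z. indicator D (snd z) *\<^sub>R g ((\<lambda>(x, t). x(i:=t)) z)) = case_prod (\<lambda>x t. indicator D t *\<^sub>R g (x(i:=t)))"
    by (auto simp: fun_eq_iff)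
  have "case_prod (\<lambda>x t. indicator D t *\<^sub>R g (x(i:=t))) \<in> borel_measurable (PP I \<Otimes>\<^sub>M unit_lebesgue)"
    using m1 unfolding eq .
  from U.borel_measurable_lebesgue_integral[OF this] show ?thesis unfolding I_def by simp
qed

lemma meas_outer:
  fixes g :: "_ \<Rightarrow> complex"
  assumes g: "g \<in> borel_measurable (PP {1..m})" and i: "i \<in> {1..m}" and D: "D \<in> sets unit_lebesgue"
    and B: "\<And>j. j \<in> {1..m} \<Longrightarrow> B j \<in> sets unit_lebesgue"
  shows "(\<lambda>x. indicator (PiE ({1..m}-{i}) B) x *\<^sub>R (LINT t|unit_lebesgue. indicator D t *\<^sub>R g (x(i:=t))))
     \<in> borel_measurable (PP ({1..m}-{i}))"
proof -
  have "PiE ({1..m}-{i}) B \<in> sets (PP ({1..m}-{i}))" using B by (intro box_sets) auto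
  then show ?thesis using meas_slice[OF g i D]
    by (intro borel_measurable_scaleR borel_measurable_indicator) auto
qed

lemma vanish:
  fixes G :: "_ \<Rightarrow> complex"
  assumes G: "integrable (cube_lebesgue m) G" and i: "i \<in> {1..m}"
    and B: "\<And>j. j \<in> {1..m} \<Longrightarrow> B j \<in> sets unit_lebesgue" and Bi: "B i = {0..1}"
    and van: "AE y in cube_lebesgue m. integrable unit_lebesgue (\<lambda>t. G (y(i:=t))) \<and>
                 integral\<^sup>L unit_lebesgue (\<lambda>t. G (y(i:=t))) = 0"
  shows "set_lebesgue_integral (cube_lebesgue m) (PiE {1..m} B) G = 0"
proof -
  have Gm: "G \<in> borel_measurable (completion (PP {1..m}))" using G unfolding cube_def' by auto
  obtain g where g: "g \<in> borel_measurable (PP {1..m})" "AE x in PP {1..m}. G x = g x"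
    using rep_exists[OF Gm] by blast
  have gi: "integrable (PP {1..m}) g" using rep_integrable[OF G[unfolded cube_def'] g] .
  have X: "PiE {1..m} B \<in> sets (PP {1..m})" using B by (intro box_sets) auto
  have U01: "{0..1::real} \<in> sets unit_lebesgue" using sets.top[of unit_lebesgue] by simp
  have BB: "B = B(i := {0..1})" using Bi by (metis fun_upd_triv)
  have "set_lebesgue_integral (cube_lebesgue m) (PiE {1..m} B) G
      = integral\<^sup>L (PP {1..m}) (\<lambda>x. indicator (PiE {1..m} B) x *\<^sub>R g x)"
    unfolding cube_def' by (rule rep_setint[OF g X])
  also have "\<dots> = integral\<^sup>L (PP {1..m}) (\<lambda>x. indicator (PiE {1..m} (B(i := {0..1}))) x *\<^sub>R g x)"
    using BB by simp
  also have "\<dots> = (LINT x|PP ({1..m}-{i}). indicator (PiE ({1..m}-{i}) B) x *\<^sub>R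
         (LINT t|unit_lebesgue. indicator {0..1} t *\<^sub>R g (x(i:=t))))"
    by (rule split_integral[OF gi i B U01])
  also have "\<dots> = (LINT x|PP ({1..m}-{i}). 0)"
  proof (rule integral_cong_AE)
    show "(\<lambda>x. indicator (PiE ({1..m}-{i}) B) x *\<^sub>R (LINT t|unit_lebesgue. indicator {0..1} t *\<^sub>R g (x(i:=t))))
     \<in> borel_measurable (PP ({1..m}-{i}))" by (rule meas_outer[OF g(1) i U01 B])
    show "(\<lambda>x. 0::complex) \<in> borel_measurable (PP ({1..m}-{i}))" by simp
    have a1: "AE x in PP ({1..m}-{i}). AE t in unit_lebesgue. G (x(i:=t)) = g (x(i:=t))"
      by (rule AE_split[OF g(2) i])
    have van': "AE y in PP {1..m}. integrable unit_lebesgue (\<lambda>t. G (y(i:=t))) \<and>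
                 integral\<^sup>L unit_lebesgue (\<lambda>t. G (y(i:=t))) = 0"
      using van unfolding cube_def' AE_completion_iff .
    have a2: "AE x in PP ({1..m}-{i}). AE t in unit_lebesgue. integrable unit_lebesgue (\<lambda>s. G (x(i:=s))) \<and>
                 integral\<^sup>L unit_lebesgue (\<lambda>s. G (x(i:=s))) = 0"
      using AE_split[OF van' i] by simp
    show "AE x in PP ({1..m}-{i}). indicator (PiE ({1..m}-{i}) B) x *\<^sub>R (LINT t|unit_lebesgue. indicator {0..1} t *\<^sub>R g (x(i:=t))) = 0"
      using a1 a2 AE_space
    proof (eventually_elim)
      case (elim x)
      have x: "x \<in> space (PP ({1..m}-{i}))" using elim(3) .
      have ii: "integrable unit_lebesgue (\<lambda>s. G (x(i:=s)))" "integral\<^sup>L unit_lebesgue (\<lambda>s. G (x(i:=s))) = 0"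
        using elim(2) by simp_all
      have "(LINT t|unit_lebesgue. indicator {0..1} t *\<^sub>R g (x(i:=t))) = (LINT t|unit_lebesgue. G (x(i:=t)))"
      proof (rule integral_cong_AE)
        show "(\<lambda>t. indicator {0..1} t *\<^sub>R g (x(i:=t))) \<in> borel_measurable unit_lebesgue"
          using meas_upd[OF g(1) i x] U01 by (intro borel_measurable_scaleR borel_measurable_indicator) auto
        show "(\<lambda>t. G (x(i:=t))) \<in> borel_measurable unit_lebesgue" using ii(1) by auto
        show "AE t in unit_lebesgue. indicator {0..1} t *\<^sub>R g (x(i:=t)) = G (x(i:=t))"
          using elim(1) AE_space[of unit_lebesgue] by eventually_elim (simp add: indicator_def)
      qed
      then show ?case using ii(2) by simp
    qed
  qed
  finally show ?thesis by simp
qed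

lemma indep:
  fixes G :: "_ \<Rightarrow> complex"
  assumes G: "integrable (cube_lebesgue m) G" and j: "j \<in> {1..m}"
    and B: "\<And>k. k \<in> {1..m} \<Longrightarrow> B k \<in> sets unit_lebesgue" and Bj: "B j = {0..1}"
    and D: "D \<in> sets unit_lebesgue"
    and const: "\<And>y t. y \<in> space (cube_lebesgue m) \<Longrightarrow> t \<in> {0..1} \<Longrightarrow> G (y(j:=t)) = G y"
  shows "set_lebesgue_integral (cube_lebesgue m) (PiE {1..m} (B(j:=D))) G
       = measure unit_lebesgue D *\<^sub>R set_lebesgue_integral (cube_lebesgue m) (PiE {1..m} B) G"
proof -
  have Gm: "G \<in> borel_measurable (completion (PP {1..m}))" using G unfolding cube_def' by auto
  obtain g where g: "g \<in> borel_measurable (PP {1..m})" "AE x in PP {1..m}. G x = g x"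
    using rep_exists[OF Gm] by blast
  have gi: "integrable (PP {1..m}) g" using rep_integrable[OF G[unfolded cube_def'] g] .
  have X: "PiE {1..m} B \<in> sets (PP {1..m})" using B by (intro box_sets) auto
  have XD: "PiE {1..m} (B(j:=D)) \<in> sets (PP {1..m})" using B D by (intro box_sets) auto
  have U01: "{0..1::real} \<in> sets unit_lebesgue" using sets.top[of unit_lebesgue] by simp
  have BB: "B = B(j := {0..1})" using Bj by (metis fun_upd_triv)
  define J where "J = {1..m} - {j}"
  have L: "set_lebesgue_integral (cube_lebesgue m) (PiE {1..m} (B(j:=D))) G
      = (LINT x|PP J. indicator (PiE J B) x *\<^sub>R (LINT t|unit_lebesgue. indicator D t *\<^sub>R g (x(j:=t))))"
    unfolding cube_def' rep_setint[OF g XD] J_def by (rule split_integral[OF gi j B D])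
  have "set_lebesgue_integral (cube_lebesgue m) (PiE {1..m} B) G
      = integral\<^sup>L (PP {1..m}) (\<lambda>x. indicator (PiE {1..m} (B(j := {0..1}))) x *\<^sub>R g x)"
    unfolding cube_def' rep_setint[OF g X] using BB by simp
  also have "\<dots> = (LINT x|PP J. indicator (PiE J B) x *\<^sub>R (LINT t|unit_lebesgue. indicator {0..1} t *\<^sub>R g (x(j:=t))))"
    unfolding J_def by (rule split_integral[OF gi j B U01])
  finally have R: "set_lebesgue_integral (cube_lebesgue m) (PiE {1..m} B) G =
     (LINT x|PP J. indicator (PiE J B) x *\<^sub>R (LINT t|unit_lebesgue. indicator {0..1} t *\<^sub>R g (x(j:=t))))" .
  have "(LINT x|PP J. indicator (PiE J B) x *\<^sub>R (LINT t|unit_lebesgue. indicator D t *\<^sub>R g (x(j:=t))))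
     = (LINT x|PP J. measure unit_lebesgue D *\<^sub>R (indicator (PiE J B) x *\<^sub>R (LINT t|unit_lebesgue. indicator {0..1} t *\<^sub>R g (x(j:=t)))))"
  proof (rule integral_cong_AE)
    show "(\<lambda>x. indicator (PiE J B) x *\<^sub>R (LINT t|unit_lebesgue. indicator D t *\<^sub>R g (x(j:=t)))) \<in> borel_measurable (PP J)"
      unfolding J_def by (rule meas_outer[OF g(1) j D B])
    have "(\<lambda>x. indicator (PiE J B) x *\<^sub>R (LINT t|unit_lebesgue. indicator {0..1} t *\<^sub>R g (x(j:=t)))) \<in> borel_measurable (PP J)"
      unfolding J_def by (rule meas_outer[OF g(1) j U01 B])
    then show "(\<lambda>x. measure unit_lebesgue D *\<^sub>R (indicator (PiE J B) x *\<^sub>R (LINT t|unit_lebesgue. indicator {0..1} t *\<^sub>R g (x(j:=t))))) \<in> borel_measurable (PP J)"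
      by (rule borel_measurable_scaleR[OF borel_measurable_const])
    have a1: "AE x in PP J. AE t in unit_lebesgue. G (x(j:=t)) = g (x(j:=t))"
      unfolding J_def by (rule AE_split[OF g(2) j])
    show "AE x in PP J. indicator (PiE J B) x *\<^sub>R (LINT t|unit_lebesgue. indicator D t *\<^sub>R g (x(j:=t)))
       = measure unit_lebesgue D *\<^sub>R (indicator (PiE J B) x *\<^sub>R (LINT t|unit_lebesgue. indicator {0..1} t *\<^sub>R g (x(j:=t))))"
      using a1 AE_space
    proof (eventually_elim)
      case (elim x)
      have x: "x \<in> space (PP ({1..m}-{j}))" using elim(2) unfolding J_def .
      define c where "c = G (x(j:=0))"
      have x0: "x(j:=0) \<in> space (cube_lebesgue m)" using space_PP_upd[OF x j] unfolding cube_def' by simp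
      have gc: "AE t in unit_lebesgue. g (x(j:=t)) = c"
        using elim(1) AE_space[of unit_lebesgue]
      proof eventually_elim
        case (elim t)
        then have "t \<in> {0..1}" by simp
        from const[OF x0 this] elim(1) show ?case by (simp add: c_def)
      qed
      have mg: "(\<lambda>t. g (x(j:=t))) \<in> borel_measurable unit_lebesgue" by (rule meas_upd[OF g(1) j x])
      have int_c: "(LINT t|unit_lebesgue. indicator E t *\<^sub>R g (x(j:=t))) = measure unit_lebesgue E *\<^sub>R c"
        if E: "E \<in> sets unit_lebesgue" for E
      proof -
        have "(LINT t|unit_lebesgue. indicator E t *\<^sub>R g (x(j:=t))) = (LINT t|unit_lebesgue. indicator E t *\<^sub>R c)"
          using gc mg E by (intro integral_cong_AE) (auto elim!: AE_mp)
        also have "\<dots> = (LINT t|unit_lebesgue. indicator E t) *\<^sub>R c"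
          using E by (subst integral_scaleR_left) (auto intro!: integrable_real_indicator simp: U.emeasure_finite less_top[symmetric])
        also have "\<dots> = measure unit_lebesgue E *\<^sub>R c"
          using E sets.sets_into_space[OF E] by (simp add: Int_absorb2)
        finally show ?thesis .
      qed
      have m1: "measure unit_lebesgue {0..1} = 1" using U.prob_space by simp
      show ?case using int_c[OF D] int_c[OF U01] m1 by simp
    qed
  qed
  also have "\<dots> = measure unit_lebesgue D *\<^sub>R (LINT x|PP J. indicator (PiE J B) x *\<^sub>R (LINT t|unit_lebesgue. indicator {0..1} t *\<^sub>R g (x(j:=t))))"
    by (rule integral_scaleR_right)
  finally show ?thesis using L R by simp
qed

definition sw :: "nat \<Rightarrow> nat \<Rightarrow> nat \<Rightarrow> nat" where
  "sw l i n = (if n = l then i else if n = i then l else n)"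

definition rho :: "nat \<Rightarrow> nat \<Rightarrow> nat \<Rightarrow> (nat \<Rightarrow> real) \<Rightarrow> (nat \<Rightarrow> real)" where
  "rho m l i \<omega> = (\<lambda>n\<in>{1..m}. \<omega> (sw l i n))"

lemma sw_in: "l \<in> {1..m} \<Longrightarrow> i \<in> {1..m} \<Longrightarrow> n \<in> {1..m} \<Longrightarrow> sw l i n \<in> {1..m}"
  by (auto simp: sw_def)

lemma sw_sw[simp]: "sw l i (sw l i n) = n"
  by (auto simp: sw_def)

lemma rho_measurable:
  assumes "l \<in> {1..m}" "i \<in> {1..m}"
  shows "rho m l i \<in> measurable (PP {1..m}) (PP {1..m})"
  unfolding rho_def
  by (rule measurable_restrict) (use assms sw_in in auto)

lemma rho_distr:
  assumes "l \<in> {1..m}" "i \<in> {1..m}"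
  shows "distr (PP {1..m}) (PP {1..m}) (rho m l i) = PP {1..m}"
proof -
  have "inj_on (sw l i) {1..m}" by (metis inj_onI sw_sw)
  moreover have "sw l i \<in> {1..m} \<rightarrow> {1..m}" using sw_in assms by auto
  ultimately have "distr (PP {1..m}) (\<Pi>\<^sub>M n\<in>{1..m}. (\<lambda>_. unit_lebesgue) (sw l i n)) (\<lambda>\<omega>. \<lambda>n\<in>{1..m}. \<omega> (sw l i n))
      = (\<Pi>\<^sub>M n\<in>{1..m}. (\<lambda>_. unit_lebesgue) (sw l i n))"
    by (intro distr_PiM_reindex) (auto simp: U_prob)
  then show ?thesis by (simp add: rho_def[abs_def])
qed

lemma rho_eq:
  assumes "x \<in> space (PP {1..m})" "l \<in> {1..m}" "i \<in> {1..m}"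
  shows "rho m l i x = x(l := x i, i := x l)"
proof (rule ext)
  fix n
  show "rho m l i x n = (x(l := x i, i := x l)) n"
    using assms by (cases "n \<in> {1..m}") (auto simp: rho_def sw_def space_PiM PiE_def extensional_def)
qed

lemma rho_space:
  assumes "x \<in> space (PP {1..m})" "l \<in> {1..m}" "i \<in> {1..m}"
  shows "rho m l i x \<in> space (PP {1..m})"
  using measurable_space[OF rho_measurable[OF assms(2,3)] assms(1)] .

lemma rho_null:
  assumes "N \<in> null_sets (PP {1..m})" "l \<in> {1..m}" "i \<in> {1..m}"
  shows "rho m l i -` N \<inter> space (PP {1..m}) \<in> null_sets (PP {1..m})"
proof -
  have "emeasure (PP {1..m}) (rho m l i -` N \<inter> space (PP {1..m})) = emeasure (distr (PP {1..m}) (PP {1..m}) (rho m l i)) N"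
    using assms by (subst emeasure_distr[OF rho_measurable]) auto
  also have "\<dots> = emeasure (PP {1..m}) N" by (simp only: rho_distr[OF assms(2,3)])
  also have "\<dots> = 0" using assms(1) by auto
  finally have E0: "emeasure (PP {1..m}) (rho m l i -` N \<inter> space (PP {1..m})) = 0" .
  have "rho m l i -` N \<inter> space (PP {1..m}) \<in> sets (PP {1..m})"
    using measurable_sets[OF rho_measurable[OF assms(2,3)]] assms(1) by blast
  then show ?thesis using E0 by (intro null_setsI)
qed

lemma swap_rep:
  fixes G g :: "_ \<Rightarrow> complex"
  assumes ae: "AE x in PP {1..m}. G x = g x" and l: "l \<in> {1..m}" and i: "i \<in> {1..m}"
  shows "AE x in PP {1..m}. G (x(l := x i, i := x l)) = g (rho m l i x)"
proof -
  obtain N where N0: "{y \<in> space (PP {1..m}). \<not> G y = g y} \<subseteq> N" "emeasure (PP {1..m}) N = 0" "N \<in> sets (PP {1..m})"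
    using AE_E[OF ae] by blast
  have Nn: "N \<in> null_sets (PP {1..m})" using N0 by auto
  show ?thesis
  proof (rule AE_I'[OF rho_null[OF Nn l i]])
    show "{x \<in> space (PP {1..m}). G (x(l := x i, i := x l)) \<noteq> g (rho m l i x)} \<subseteq> rho m l i -` N \<inter> space (PP {1..m})"
    proof (rule subsetI)
      fix x assume "x \<in> {x \<in> space (PP {1..m}). G (x(l := x i, i := x l)) \<noteq> g (rho m l i x)}"
      then have x: "x \<in> space (PP {1..m})" and ne: "G (x(l := x i, i := x l)) \<noteq> g (rho m l i x)" by auto
      have "G (rho m l i x) \<noteq> g (rho m l i x)" using ne rho_eq[OF x l i] by simp
      then have "rho m l i x \<in> N" using N0(1) rho_space[OF x l i] by blast
      then show "x \<in> rho m l i -` N \<inter> space (PP {1..m})" using x by blast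
    qed
  qed
qed

lemma swap_integrable:
  fixes G :: "_ \<Rightarrow> complex"
  assumes G: "integrable (cube_lebesgue m) G" and l: "l \<in> {1..m}" and i: "i \<in> {1..m}"
  shows "integrable (cube_lebesgue m) (\<lambda>x. G (x(l := x i, i := x l)))"
proof -
  have Gm: "G \<in> borel_measurable (completion (PP {1..m}))" using G unfolding cube_def' by auto
  obtain g where g: "g \<in> borel_measurable (PP {1..m})" "AE x in PP {1..m}. G x = g x"
    using rep_exists[OF Gm] by blast
  have gi: "integrable (PP {1..m}) g" using rep_integrable[OF G[unfolded cube_def'] g] .
  have ae: "AE x in PP {1..m}. G (x(l := x i, i := x l)) = g (rho m l i x)"
    by (rule swap_rep[OF g(2) l i])
  have gr: "(\<lambda>x. g (rho m l i x)) \<in> borel_measurable (PP {1..m})"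
    using g(1) rho_measurable[OF l i] by (rule measurable_compose[rotated])
  have "integrable (distr (PP {1..m}) (PP {1..m}) (rho m l i)) g"
    using gi by (simp only: rho_distr[OF l i])
  then have "integrable (PP {1..m}) (\<lambda>x. g (rho m l i x))"
    using integrable_distr_eq[OF rho_measurable[OF l i] g(1)] by blast
  then have "integrable (completion (PP {1..m})) (\<lambda>x. g (rho m l i x))"
    using gr integrable_completion by blast
  moreover have "(\<lambda>x. G (x(l := x i, i := x l))) \<in> borel_measurable (completion (PP {1..m}))"
    by (rule measurable_completion_AE[OF gr ae])
  moreover have "AE x in completion (PP {1..m}). g (rho m l i x) = G (x(l := x i, i := x l))"
    using ae unfolding AE_completion_iff by (rule AE_mp) (rule AE_I2, simp)
  ultimately show ?thesis unfolding cube_def'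
    by (rule integrable_cong_AE_imp)
qed

lemma box_rho:
  assumes x: "x \<in> space (PP {1..m})" and l: "l \<in> {1..m}" and i: "i \<in> {1..m}"
  shows "x \<in> PiE {1..m} B \<longleftrightarrow> rho m l i x \<in> PiE {1..m} (B(l := B i, i := B l))"
proof -
  have B': "B(l := B i, i := B l) = (\<lambda>n. B (sw l i n))" by (auto simp: sw_def fun_eq_iff)
  have xe: "x \<in> extensional {1..m}" using x by (simp add: space_PiM PiE_def)
  have "rho m l i x \<in> PiE {1..m} (\<lambda>n. B (sw l i n)) \<longleftrightarrow> (\<forall>n\<in>{1..m}. x (sw l i n) \<in> B (sw l i n))"
    unfolding rho_def by (rule restrict_PiE_iff)
  also have "\<dots> \<longleftrightarrow> (\<forall>n\<in>{1..m}. x n \<in> B n)"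
  proof
    assume a: "\<forall>n\<in>{1..m}. x (sw l i n) \<in> B (sw l i n)"
    show "\<forall>n\<in>{1..m}. x n \<in> B n"
    proof
      fix n assume n: "n \<in> {1..m}"
      have "x (sw l i (sw l i n)) \<in> B (sw l i (sw l i n))" using a sw_in[OF l i n] by blast
      then show "x n \<in> B n" by simp
    qed
  next
    assume a: "\<forall>n\<in>{1..m}. x n \<in> B n"
    show "\<forall>n\<in>{1..m}. x (sw l i n) \<in> B (sw l i n)"
      using a sw_in[OF l i] by blast
  qed
  also have "\<dots> \<longleftrightarrow> x \<in> PiE {1..m} B" using xe by (simp add: PiE_iff)
  finally show ?thesis unfolding B' by simp
qed

lemma swap_setint:
  fixes G :: "_ \<Rightarrow> complex"
  assumes G: "integrable (cube_lebesgue m) G" and l: "l \<in> {1..m}" and i: "i \<in> {1..m}"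
    and B: "\<And>j. j \<in> {1..m} \<Longrightarrow> B j \<in> sets unit_lebesgue"
  shows "set_lebesgue_integral (cube_lebesgue m) (PiE {1..m} B) (\<lambda>x. G (x(l := x i, i := x l)))
       = set_lebesgue_integral (cube_lebesgue m) (PiE {1..m} (B(l := B i, i := B l))) G"
proof -
  have Gm: "G \<in> borel_measurable (completion (PP {1..m}))" using G unfolding cube_def' by auto
  obtain g where g: "g \<in> borel_measurable (PP {1..m})" "AE x in PP {1..m}. G x = g x"
    using rep_exists[OF Gm] by blast
  have ae: "AE x in PP {1..m}. G (x(l := x i, i := x l)) = g (rho m l i x)"
    by (rule swap_rep[OF g(2) l i])
  have gr: "(\<lambda>x. g (rho m l i x)) \<in> borel_measurable (PP {1..m})"
    using g(1) rho_measurable[OF l i] by (rule measurable_compose[rotated])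
  have X: "PiE {1..m} B \<in> sets (PP {1..m})" using B by (intro box_sets) auto
  have Y: "PiE {1..m} (B(l := B i, i := B l)) \<in> sets (PP {1..m})" using B l i by (intro box_sets) auto
  define Y' where "Y' = PiE {1..m} (B(l := B i, i := B l))"
  have hm: "(\<lambda>y. indicator Y' y *\<^sub>R g y) \<in> borel_measurable (PP {1..m})"
    using Y g(1) unfolding Y'_def by (intro borel_measurable_scaleR borel_measurable_indicator) auto
  have "set_lebesgue_integral (cube_lebesgue m) (PiE {1..m} B) (\<lambda>x. G (x(l := x i, i := x l)))
     = integral\<^sup>L (PP {1..m}) (\<lambda>x. indicator (PiE {1..m} B) x *\<^sub>R g (rho m l i x))"
    unfolding cube_def' by (rule rep_setint[OF gr ae X])
  also have "\<dots> = integral\<^sup>L (PP {1..m}) (\<lambda>x. (\<lambda>y. indicator Y' y *\<^sub>R g y) (rho m l i x))"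
  proof (rule Bochner_Integration.integral_cong[OF refl])
    fix x assume x: "x \<in> space (PP {1..m})"
    show "indicator (PiE {1..m} B) x *\<^sub>R g (rho m l i x) = (\<lambda>y. indicator Y' y *\<^sub>R g y) (rho m l i x)"
      using box_rho[OF x l i, of B] unfolding Y'_def by (simp add: indicator_def)
  qed
  also have "\<dots> = integral\<^sup>L (distr (PP {1..m}) (PP {1..m}) (rho m l i)) (\<lambda>y. indicator Y' y *\<^sub>R g y)"
    by (rule integral_distr[OF rho_measurable[OF l i] hm, symmetric])
  also have "\<dots> = integral\<^sup>L (PP {1..m}) (\<lambda>y. indicator Y' y *\<^sub>R g y)"
    using rho_distr[OF l i] by simp
  also have "\<dots> = set_lebesgue_integral (cube_lebesgue m) Y' G"
    unfolding cube_def' Y'_def by (rule rep_setint[OF g Y, symmetric])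
  finally show ?thesis unfolding Y'_def .
qed

lemma alt_zero:
  fixes G :: "_ \<Rightarrow> complex"
  assumes G: "integrable (cube_lebesgue m) G" and i: "i \<in> {1..m}" and j: "j \<in> {1..m}"
    and alt: "\<And>x. x \<in> space (cube_lebesgue m) \<Longrightarrow> G (x(i := x j, j := x i)) = - G x"
    and B: "\<And>k. k \<in> {1..m} \<Longrightarrow> B k \<in> sets unit_lebesgue" and Bij: "B i = B j"
  shows "set_lebesgue_integral (cube_lebesgue m) (PiE {1..m} B) G = 0"
proof -
  have "set_lebesgue_integral (cube_lebesgue m) (PiE {1..m} B) G
      = set_lebesgue_integral (cube_lebesgue m) (PiE {1..m} B) (\<lambda>x. - G (x(i := x j, j := x i)))"
    unfolding set_lebesgue_integral_def
    by (rule Bochner_Integration.integral_cong[OF refl]) (simp add: alt)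
  also have "\<dots> = - set_lebesgue_integral (cube_lebesgue m) (PiE {1..m} B) (\<lambda>x. G (x(i := x j, j := x i)))"
    unfolding set_lebesgue_integral_def by simp
  also have "\<dots> = - set_lebesgue_integral (cube_lebesgue m) (PiE {1..m} (B(i := B j, j := B i))) G"
    by (simp only: swap_setint[OF G i j B])
  also have "B(i := B j, j := B i) = B" using Bij by (metis fun_upd_triv)
  finally have "set_lebesgue_integral (cube_lebesgue m) (PiE {1..m} B) G = - set_lebesgue_integral (cube_lebesgue m) (PiE {1..m} B) G" .
  then show ?thesis by simp
qed

lemma mem_box_upd:
  assumes "x \<in> extensional I" "i \<in> I"
  shows "x \<in> PiE I (B(i:=D)) \<longleftrightarrow> ((\<forall>j\<in>I-{i}. x j \<in> B j) \<and> x i \<in> D)"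
  using assms by (auto simp: PiE_iff)

lemma additive:
  fixes G :: "_ \<Rightarrow> complex"
  assumes G: "integrable (cube_lebesgue m) G" and i: "i \<in> {1..m}"
    and B: "\<And>k. k \<in> {1..m} \<Longrightarrow> B k \<in> sets unit_lebesgue"
    and A: "\<And>a. a \<in> {1..m} \<Longrightarrow> A a \<in> sets unit_lebesgue"
    and disj: "\<And>a b. a \<in> {1..m} \<Longrightarrow> b \<in> {1..m} \<Longrightarrow> a \<noteq> b \<Longrightarrow> A a \<inter> A b = {}"
    and cover: "(\<Union>a\<in>{1..m}. A a) = {0..1}"
  shows "set_lebesgue_integral (cube_lebesgue m) (PiE {1..m} (B(i:={0..1}))) G
     = (\<Sum>a\<in>{1..m}. set_lebesgue_integral (cube_lebesgue m) (PiE {1..m} (B(i:=A a))) G)"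
proof -
  have bs: "PiE {1..m} (B(i:=D)) \<in> sets (cube_lebesgue m)" if "D \<in> sets unit_lebesgue" for D
  proof -
    have "PiE {1..m} (B(i:=D)) \<in> sets (PP {1..m})" using B that by (intro box_sets) auto
    then show ?thesis unfolding cube_def' by simp
  qed
  have "(\<Sum>a\<in>{1..m}. set_lebesgue_integral (cube_lebesgue m) (PiE {1..m} (B(i:=A a))) G)
     = integral\<^sup>L (cube_lebesgue m) (\<lambda>x. \<Sum>a\<in>{1..m}. indicator (PiE {1..m} (B(i:=A a))) x *\<^sub>R G x)"
    unfolding set_lebesgue_integral_def
    by (rule Bochner_Integration.integral_sum[symmetric]) (intro integrable_mult_indicator bs A G)
  also have "\<dots> = set_lebesgue_integral (cube_lebesgue m) (PiE {1..m} (B(i:={0..1}))) G"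
    unfolding set_lebesgue_integral_def
  proof (rule Bochner_Integration.integral_cong[OF refl])
    fix x assume x: "x \<in> space (cube_lebesgue m)"
    have xP: "x \<in> PiE {1..m} (\<lambda>_. {0..1})" using x unfolding cube_def' by (simp add: space_PiM)
    have xe: "x \<in> extensional {1..m}" using xP by (simp add: PiE_def)
    have xi: "x i \<in> {0..1}" using PiE_mem[OF xP i] .
    define q :: real where "q = (if (\<forall>j\<in>{1..m}-{i}. x j \<in> B j) then 1 else 0)"
    have ind: "indicator (PiE {1..m} (B(i:=D))) x = q * indicator D (x i)" for D
      using mem_box_upd[OF xe i, of B D] by (simp add: q_def indicator_def)
    have df: "disjoint_family_on A {1..m}" using disj by (auto simp: disjoint_family_on_def)
    have "(\<Sum>a\<in>{1..m}. indicator (A a) (x i) :: real) = indicator (\<Union>a\<in>{1..m}. A a) (x i)"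
      by (rule indicator_UN_disjoint[symmetric]) (use df in auto)
    also have "\<dots> = 1" using xi cover by simp
    finally have s1: "(\<Sum>a\<in>{1..m}. indicator (A a) (x i) :: real) = 1" .
    have "(\<Sum>a\<in>{1..m}. indicator (PiE {1..m} (B(i:=A a))) x *\<^sub>R G x)
        = (\<Sum>a\<in>{1..m}. (q * indicator (A a) (x i)) *\<^sub>R G x)"
      by (rule sum.cong[OF refl]) (simp only: ind)
    also have "\<dots> = (q * (\<Sum>a\<in>{1..m}. indicator (A a) (x i))) *\<^sub>R G x"
      by (simp only: sum_distrib_left scaleR_sum_left)
    also have "\<dots> = indicator (PiE {1..m} (B(i:={0..1}))) x *\<^sub>R G x"
    proof -
      have i01: "indicator (PiE {1..m} (B(i:={0..1}))) x = q" using ind[of "{0..1}"] xi by simp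
      show ?thesis by (simp only: s1 i01 mult_1_right)
    qed
    finally show "(\<Sum>a\<in>{1..m}. indicator (PiE {1..m} (B(i:=A a))) x *\<^sub>R G x)
        = indicator (PiE {1..m} (B(i:={0..1}))) x *\<^sub>R G x" .
  qed
  finally show ?thesis by simp
qed

lemma indep_prod:
  fixes G :: "_ \<Rightarrow> complex"
  assumes G: "integrable (cube_lebesgue m) G"
    and const: "\<And>j y t. j \<in> {1..m} - S \<Longrightarrow> y \<in> space (cube_lebesgue m) \<Longrightarrow> t \<in> {0..1} \<Longrightarrow> G (y(j:=t)) = G y"
    and B: "\<And>k. k \<in> {1..m} \<Longrightarrow> B k \<in> sets unit_lebesgue"
    and Bout: "\<And>j. j \<in> {1..m} - S \<Longrightarrow> B j = {0..1}"
    and A: "\<And>j. j \<in> {1..m} \<Longrightarrow> A j \<in> sets unit_lebesgue"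
    and J: "J \<subseteq> {1..m} - S"
  shows "set_lebesgue_integral (cube_lebesgue m) (PiE {1..m} (\<lambda>j. if j \<in> J then A j else B j)) G
     = (\<Prod>j\<in>J. measure unit_lebesgue (A j)) *\<^sub>R set_lebesgue_integral (cube_lebesgue m) (PiE {1..m} B) G"
proof -
  have "finite J" using J by (rule finite_subset) auto
  then show ?thesis using J
  proof (induction J rule: finite_induct)
    case empty
    then show ?case by simp
  next
    case (insert j J)
    define BJ where "BJ = (\<lambda>j. if j \<in> J then A j else B j)"
    have j: "j \<in> {1..m}" "j \<in> {1..m} - S" using insert by auto
    have eq: "(\<lambda>k. if k \<in> insert j J then A k else B k) = BJ(j := A j)"
      by (auto simp: BJ_def fun_eq_iff)
    have BJm: "\<And>k. k \<in> {1..m} \<Longrightarrow> BJ k \<in> sets unit_lebesgue" using A B by (auto simp: BJ_def)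
    have BJj: "BJ j = {0..1}" using insert(2) Bout[OF j(2)] by (simp add: BJ_def)
    have "set_lebesgue_integral (cube_lebesgue m) (PiE {1..m} (BJ(j := A j))) G
       = measure unit_lebesgue (A j) *\<^sub>R set_lebesgue_integral (cube_lebesgue m) (PiE {1..m} BJ) G"
      apply (rule indep[where B=BJ and G=G and j=j and D="A j" and m=m])
      apply (rule G)
      apply (rule j(1))
      apply (erule BJm)
      apply (rule BJj)
      apply (rule A[OF j(1)])
      apply (erule (1) const[OF j(2)])
      done
    also have "set_lebesgue_integral (cube_lebesgue m) (PiE {1..m} BJ) G
       = (\<Prod>j\<in>J. measure unit_lebesgue (A j)) *\<^sub>R set_lebesgue_integral (cube_lebesgue m) (PiE {1..m} B) G"
      using insert unfolding BJ_def by auto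
    finally have X: "set_lebesgue_integral (cube_lebesgue m) (PiE {1..m} (BJ(j := A j))) G
       = measure unit_lebesgue (A j) *\<^sub>R ((\<Prod>j\<in>J. measure unit_lebesgue (A j)) *\<^sub>R set_lebesgue_integral (cube_lebesgue m) (PiE {1..m} B) G)" .
    show ?case unfolding eq by (simp only: X prod.insert[OF insert(1,2)] scaleR_scaleR)
  qed
qed

lemma triple_reindex:
  fixes h :: "nat set \<Rightarrow> nat \<Rightarrow> nat \<Rightarrow> 'c::comm_monoid_add"
  assumes fin: "finite Km"
  shows "(\<Sum>S\<in>{S. S \<subseteq> Km \<and> card S = k}. \<Sum>l\<in>Km-S. \<Sum>i\<in>S. h (insert l S - {i}) l i)
       = (\<Sum>T\<in>{S. S \<subseteq> Km \<and> card S = k}. \<Sum>p\<in>T. \<Sum>q\<in>Km-T. h T p q)"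
proof -
  define SS where "SS = {S. S \<subseteq> Km \<and> card S = k}"
  have finSS: "finite SS" unfolding SS_def by (rule finite_subset[of _ "Pow Km"]) (use fin in auto)
  have finS: "\<And>S. S \<in> SS \<Longrightarrow> finite S" unfolding SS_def using fin finite_subset by blast
  define gL where "gL = (\<lambda>S y. case y of (l, i) \<Rightarrow> h (insert l S - {i}) l i)"
  define gR where "gR = (\<lambda>T y. case y of (p, q) \<Rightarrow> h T p q)"
  define X where "X = Sigma SS (\<lambda>S. (Km-S) \<times> S)"
  define Y where "Y = Sigma SS (\<lambda>T. T \<times> (Km-T))"
  have L: "(\<Sum>S\<in>SS. \<Sum>l\<in>Km-S. \<Sum>i\<in>S. h (insert l S - {i}) l i) = sum (case_prod gL) X"
  proof -
    have "(\<Sum>S\<in>SS. \<Sum>l\<in>Km-S. \<Sum>i\<in>S. h (insert l S - {i}) l i) = (\<Sum>S\<in>SS. sum (gL S) ((Km-S) \<times> S))"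
      unfolding gL_def by (rule sum.cong[OF refl]) (rule sum.cartesian_product)
    also have "\<dots> = sum (case_prod gL) X"
      unfolding X_def by (rule sum.Sigma) (use finSS finS fin in auto)
    finally show ?thesis .
  qed
  have R: "(\<Sum>T\<in>SS. \<Sum>p\<in>T. \<Sum>q\<in>Km-T. h T p q) = sum (case_prod gR) Y"
  proof -
    have "(\<Sum>T\<in>SS. \<Sum>p\<in>T. \<Sum>q\<in>Km-T. h T p q) = (\<Sum>T\<in>SS. sum (gR T) (T \<times> (Km-T)))"
      unfolding gR_def by (rule sum.cong[OF refl]) (rule sum.cartesian_product)
    also have "\<dots> = sum (case_prod gR) Y"
      unfolding Y_def by (rule sum.Sigma) (use finSS finS fin in auto)
    finally show ?thesis .
  qed
  define jf where "jf = (\<lambda>(S::nat set, l::nat, i::nat). (insert l S - {i}, l, i))"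
  define jg where "jg = (\<lambda>(T::nat set, p::nat, q::nat). (insert q T - {p}, p, q))"
  have XD: "S \<subseteq> Km \<and> card S = k \<and> l \<in> Km \<and> l \<notin> S \<and> i \<in> S" if "(S, l, i) \<in> X" for S l i
    using that unfolding X_def SS_def by blast
  have YD: "T \<subseteq> Km \<and> card T = k \<and> p \<in> T \<and> q \<in> Km \<and> q \<notin> T" if "(T, p, q) \<in> Y" for T p q
    using that unfolding Y_def SS_def by blast
  have "sum (case_prod gL) X = sum (case_prod gR) Y"
  proof (rule sum.reindex_bij_witness[where j=jf and i=jg])
    fix z assume z: "z \<in> X"
    obtain S l i where zz: "z = (S, l, i)" by (cases z) auto
    have S: "S \<subseteq> Km" "card S = k" "l \<in> Km" "l \<notin> S" "i \<in> S" using XD z zz by blast+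
    have fS: "finite S" using S(1) fin finite_subset by blast
    have li: "l \<noteq> i" using S by blast
    have e1: "insert i (insert l S - {i}) - {l} = S" using S li by blast
    show "jg (jf z) = z" using e1 by (simp add: zz jf_def jg_def)
    have c: "card (insert l S - {i}) = k" using S fS by (simp add: card_insert_if)
    have "insert l S - {i} \<subseteq> Km" "l \<in> insert l S - {i}" "i \<in> Km" "i \<notin> insert l S - {i}"
      using S li by blast+
    then show "jf z \<in> Y" using c by (simp add: zz jf_def Y_def SS_def)
    show "case_prod gR (jf z) = case_prod gL z" by (simp add: zz jf_def gL_def gR_def)
  next
    fix z assume z: "z \<in> Y"
    obtain T p q where zz: "z = (T, p, q)" by (cases z) auto
    have T: "T \<subseteq> Km" "card T = k" "p \<in> T" "q \<in> Km" "q \<notin> T" using YD z zz by blast+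
    have fT: "finite T" using T(1) fin finite_subset by blast
    have pq: "p \<noteq> q" using T by blast
    have e1: "insert p (insert q T - {p}) - {q} = T" using T pq by blast
    show "jf (jg z) = z" using e1 by (simp add: zz jf_def jg_def)
    have c: "card (insert q T - {p}) = k" using T fT by (simp add: card_insert_if)
    have "insert q T - {p} \<subseteq> Km" "p \<in> Km" "p \<notin> insert q T - {p}" "q \<in> insert q T - {p}"
      using T pq by blast+
    then show "jg z \<in> X" using c by (simp add: zz jg_def X_def SS_def)
  qed
  then show ?thesis using L R unfolding SS_def by simp
qed

lemma setint_divide:
  fixes f :: "_ \<Rightarrow> complex"
  shows "set_lebesgue_integral M X (\<lambda>x. f x / c) = set_lebesgue_integral M X f / c"
proof -
  have "(\<lambda>x. indicator X x *\<^sub>R (f x / c)) = (\<lambda>x. (indicator X x *\<^sub>R f x) / c)"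
    by (simp add: fun_eq_iff scaleR_conv_of_real)
  then show ?thesis unfolding set_lebesgue_integral_def by simp
qed

lemma cube_space: "space (cube_lebesgue m) = PiE {1..m} (\<lambda>_. {0..1})"
  by (simp add: cube_def' space_PiM)

lemma upd_space:
  assumes "y \<in> space (cube_lebesgue m)" "j \<in> {1..m}" "t \<in> {0..1}"
  shows "y(j:=t) \<in> space (cube_lebesgue m)"
proof -
  have y: "y \<in> PiE {1..m} (\<lambda>_. {0..1})" using assms(1) by (simp add: cube_space)
  have "y(j:=t) \<in> PiE (insert j {1..m}) (\<lambda>_. {0..1::real})"
    by (rule PiE_fun_upd[OF assms(3) y])
  moreover have "insert j {1..m} = {1..m}" using assms(2) by blast
  ultimately show ?thesis by (simp add: cube_space)
qed

theorem mainTheorem2: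
  fixes m k :: nat and \<alpha> :: "nat \<Rightarrow> real"
    and f :: "(nat \<Rightarrow> real) \<Rightarrow> complex" and F :: "nat set \<Rightarrow> (nat \<Rightarrow> real) \<Rightarrow> complex"
  assumes alpha: "\<forall>i\<in>{1..m}. 0 < \<alpha> i \<and> \<alpha> i < 1"
    and alpha_sum: "(\<Sum>i\<in>{1..m}. \<alpha> i) = 1"
    and f_int: "integrable (cube_lebesgue m) f"
    and walsh: "walsh_expansion m f F"
    and k: "1 \<le> k" "k \<le> m"
    and alt: "\<forall>S. S \<subseteq> {1..m} \<and> card S = k \<and> 2 \<le> k \<longrightarrow> alternating_on m S (F S)"
    and rel: "\<forall>S. S \<subseteq> {1..m} \<and> card S = k \<and> k \<le> m - 1 \<longrightarrow>
       (\<forall>l\<in>{1..m} - S. AE x in cube_lebesgue m.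
          F S x / (\<Prod>i\<in>S. complex_of_real (\<alpha> i)) =
          (\<Sum>i\<in>S. F (insert l S - {i}) (x(l := x i, i := x l))
                     / (\<Prod>j\<in>insert l S - {i}. complex_of_real (\<alpha> j))))"
  shows "\<forall>A. alpha_partition m \<alpha> A \<longrightarrow>
     set_lebesgue_integral (cube_lebesgue m) (PiE {1..m} A)
       (\<lambda>x. \<Sum>S\<in>{S. S \<subseteq> {1..m} \<and> card S = k}. F S x) = 0"
proof (intro allI impI)
  fix A assume AP: "alpha_partition m \<alpha> A"
  define SS where "SS = {S. S \<subseteq> {1..m} \<and> card S = k}"
  have Ameas: "\<And>i. i \<in> {1..m} \<Longrightarrow> A i \<in> sets lebesgue" "\<And>i. i \<in> {1..m} \<Longrightarrow> measure lebesgue (A i) = \<alpha> i"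
    using AP unfolding alpha_partition_def by blast+
  have cover: "(\<Union>i\<in>{1..m}. A i) = {0..1}" using AP unfolding alpha_partition_def by blast
  have disj: "\<And>i j. i \<in> {1..m} \<Longrightarrow> j \<in> {1..m} \<Longrightarrow> i \<noteq> j \<Longrightarrow> A i \<inter> A j = {}"
    using AP unfolding alpha_partition_def by blast
  have Asub: "\<And>i. i \<in> {1..m} \<Longrightarrow> A i \<subseteq> {0..1}" using cover by blast
  have AU: "\<And>i. i \<in> {1..m} \<Longrightarrow> A i \<in> sets unit_lebesgue" using U_sets Ameas(1) Asub by blast
  have Amu: "\<And>i. i \<in> {1..m} \<Longrightarrow> measure unit_lebesgue (A i) = \<alpha> i" using U_measure Ameas Asub by metis
  have U01: "{0..1::real} \<in> sets unit_lebesgue" using sets.top[of unit_lebesgue] by simp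
  have Fint: "\<And>S. S \<subseteq> {1..m} \<Longrightarrow> integrable (cube_lebesgue m) (F S)"
    using walsh unfolding walsh_expansion_def by blast
  have Fdep: "\<And>S x y. S \<subseteq> {1..m} \<Longrightarrow> x \<in> space (cube_lebesgue m) \<Longrightarrow> y \<in> space (cube_lebesgue m) \<Longrightarrow>
      (\<forall>i\<in>S. x i = y i) \<Longrightarrow> F S x = F S y"
    using walsh unfolding walsh_expansion_def by blast
  have Fvan: "\<And>S i. S \<subseteq> {1..m} \<Longrightarrow> i \<in> S \<Longrightarrow> AE x in cube_lebesgue m.
          integrable unit_lebesgue (\<lambda>t. F S (x(i := t))) \<and>
          integral\<^sup>L unit_lebesgue (\<lambda>t. F S (x(i := t))) = 0"
    using walsh unfolding walsh_expansion_def by blast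
  have Fconst: "F S (y(j:=t)) = F S y"
    if "S \<subseteq> {1..m}" "j \<in> {1..m} - S" "y \<in> space (cube_lebesgue m)" "t \<in> {0..1}" for S j y t
  proof (rule Fdep[OF that(1) upd_space[OF that(3) _ that(4)] that(3)])
    show "j \<in> {1..m}" using that(2) by blast
    show "\<forall>i\<in>S. (y(j := t)) i = y i" using that(2) by auto
  qed
  define bx where "bx T = (\<lambda>j. if j \<in> T then A j else {0..1::real})" for T
  have bxU: "\<And>T j. j \<in> {1..m} \<Longrightarrow> bx T j \<in> sets unit_lebesgue" using AU U01 by (simp add: bx_def)
  define SI where "SI T B = set_lebesgue_integral (cube_lebesgue m) (PiE {1..m} B) (F T)" for T B
  define K where "K T = SI T (bx T)" for T
  define Mv where "Mv T p q = SI T ((bx T)(p := A q))" for T p q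
  define a where "a j = complex_of_real (\<alpha> j)" for j
  define \<pi> where "\<pi> T = (\<Prod>j\<in>T. a j)" for T
  have pinz: "\<pi> T \<noteq> 0" if "T \<subseteq> {1..m}" for T
  proof -
    have "finite T" using that finite_subset by blast
    moreover have "\<forall>j\<in>T. a j \<noteq> 0"
    proof
      fix j assume "j \<in> T"
      then have "0 < \<alpha> j" using alpha that by blast
      then show "a j \<noteq> 0" by (simp add: a_def)
    qed
    ultimately show ?thesis unfolding \<pi>_def by simp
  qed
  have finSS: "finite SS" unfolding SS_def by (rule finite_subset[of _ "Pow {1..m}"]) auto
  have SSD: "S \<subseteq> {1..m}" "card S = k" "finite S" if "S \<in> SS" for S
    using that finite_subset[of S "{1..m}"] unfolding SS_def by auto

  have E: "SI S A = (\<Prod>j\<in>{1..m}-S. a j) * K S" if S: "S \<in> SS" for S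
  proof -
    have e1: "SI S (\<lambda>j. if j \<in> {1..m}-S then A j else bx S j)
        = (\<Prod>j\<in>{1..m}-S. measure unit_lebesgue (A j)) *\<^sub>R SI S (bx S)"
      unfolding SI_def
    proof (rule indep_prod[where S=S])
      show "integrable (cube_lebesgue m) (F S)" using Fint SSD(1)[OF S] .
      show "\<And>j y t. j \<in> {1..m} - S \<Longrightarrow> y \<in> space (cube_lebesgue m) \<Longrightarrow> t \<in> {0..1} \<Longrightarrow> F S (y(j:=t)) = F S y"
        using Fconst SSD(1)[OF S] by blast
      show "\<And>k. k \<in> {1..m} \<Longrightarrow> bx S k \<in> sets unit_lebesgue" by (rule bxU)
      show "\<And>j. j \<in> {1..m} - S \<Longrightarrow> bx S j = {0..1}" by (simp add: bx_def)
      show "\<And>j. j \<in> {1..m} \<Longrightarrow> A j \<in> sets unit_lebesgue" by (rule AU)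
    qed simp
    have e2: "PiE {1..m} (\<lambda>j. if j \<in> {1..m}-S then A j else bx S j) = PiE {1..m} A"
      by (rule PiE_cong) (simp add: bx_def)
    have e3: "(\<Prod>j\<in>{1..m}-S. measure unit_lebesgue (A j)) = (\<Prod>j\<in>{1..m}-S. \<alpha> j)"
      by (rule prod.cong) (simp_all add: Amu)
    have "SI S A = (\<Prod>j\<in>{1..m}-S. \<alpha> j) *\<^sub>R K S"
      using e1 unfolding SI_def K_def e2 e3 .
    then show ?thesis by (simp only: a_def scaleR_conv_of_real of_real_prod)
  qed

  have V: "K T = - (\<Sum>q\<in>{1..m}-T. Mv T p q)" if T: "T \<in> SS" and p: "p \<in> T" for T p
  proof -
    have pK: "p \<in> {1..m}" using SSD(1)[OF T] p by blast
    have TK: "T \<subseteq> {1..m}" "finite T" using SSD[OF T] by auto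
    have z: "SI T ((bx T)(p := {0..1})) = 0"
      unfolding SI_def
    proof (rule vanish[OF Fint[OF TK(1)] pK])
      show "\<And>j. j \<in> {1..m} \<Longrightarrow> ((bx T)(p := {0..1})) j \<in> sets unit_lebesgue" using bxU U01 by simp
      show "((bx T)(p := {0..1})) p = {0..1}" by simp
      show "AE y in cube_lebesgue m. integrable unit_lebesgue (\<lambda>t. F T (y(p:=t))) \<and>
                 integral\<^sup>L unit_lebesgue (\<lambda>t. F T (y(p:=t))) = 0" by (rule Fvan[OF TK(1) p])
    qed
    have add: "SI T ((bx T)(p := {0..1})) = (\<Sum>a\<in>{1..m}. Mv T p a)"
      unfolding SI_def Mv_def by (rule additive[OF Fint[OF TK(1)] pK bxU AU disj cover])
    have split1: "(\<Sum>a\<in>{1..m}. Mv T p a) = (\<Sum>a\<in>{1..m}-T. Mv T p a) + (\<Sum>a\<in>T. Mv T p a)"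
      by (rule sum.subset_diff[OF TK(1)]) simp
    have split2: "(\<Sum>a\<in>T. Mv T p a) = Mv T p p + (\<Sum>a\<in>T-{p}. Mv T p a)"
      by (rule sum.remove[OF TK(2) p])
    have pp: "Mv T p p = K T"
    proof -
      have "(bx T)(p := A p) = bx T" using p by (auto simp: bx_def fun_eq_iff)
      then show ?thesis by (simp add: Mv_def K_def)
    qed
    have zero: "(\<Sum>a\<in>T-{p}. Mv T p a) = 0"
    proof (rule sum.neutral, rule ballI)
      fix b assume b: "b \<in> T - {p}"
      have bT: "b \<in> T" and pb: "p \<noteq> b" using b by auto
      have bK: "b \<in> {1..m}" using bT TK(1) by blast
      have c2: "card {p, b} = 2" using pb by simp
      have "card {p, b} \<le> card T" using p bT by (intro card_mono[OF TK(2)]) auto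
      then have k2: "2 \<le> k" using c2 SSD(2)[OF T] by simp
      have "alternating_on m T (F T)"
        using alt[rule_format, OF conjI[OF TK(1) conjI[OF SSD(2)[OF T] k2]]] .
      then have "\<forall>i\<in>T. \<forall>j\<in>T. i \<noteq> j \<longrightarrow> (\<forall>x\<in>space (cube_lebesgue m).
        F T (x(i := x j, j := x i)) = - F T x)" unfolding alternating_on_def .
      note altT = this[rule_format, OF p bT pb]
      show "Mv T p b = 0"
        unfolding Mv_def SI_def
      proof (rule alt_zero[where G="F T" and i=p and j=b and m=m and B="(bx T)(p := A b)"])
        show "integrable (cube_lebesgue m) (F T)" by (rule Fint[OF TK(1)])
        show "p \<in> {1..m}" by (rule pK)
        show "b \<in> {1..m}" by (rule bK)
        show "\<And>x. x \<in> space (cube_lebesgue m) \<Longrightarrow> F T (x(p := x b, b := x p)) = - F T x" by (rule altT)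
        show "\<And>k. k \<in> {1..m} \<Longrightarrow> ((bx T)(p := A b)) k \<in> sets unit_lebesgue" using bxU AU bK by simp
        show "((bx T)(p := A b)) p = ((bx T)(p := A b)) b" using bT pb by (simp add: bx_def)
      qed
    qed
    have "K T + (\<Sum>q\<in>{1..m}-T. Mv T p q) = 0" using z add split1 split2 pp zero by (simp add: algebra_simps)
    then show ?thesis by (rule eq_neg_iff_add_eq_0[THEN iffD2])
  qed

  have R: "K S / \<pi> S = (\<Sum>i\<in>S. Mv (insert l S - {i}) l i / \<pi> (insert l S - {i}))"
    if S: "S \<in> SS" and l: "l \<in> {1..m} - S" for S l
  proof -
    have SK: "S \<subseteq> {1..m}" "finite S" "card S = k" using SSD[OF S] by auto
    have lK: "l \<in> {1..m}" "l \<notin> S" using l by auto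
    have "S \<subset> {1..m}" using SK(1) lK by blast
    then have "card S < card {1..m::nat}" by (rule psubset_card_mono[rotated]) simp
    then have km: "k \<le> m - 1" using SK(3) by simp
    have relS: "AE x in cube_lebesgue m. F S x / \<pi> S =
          (\<Sum>i\<in>S. F (insert l S - {i}) (x(l := x i, i := x l)) / \<pi> (insert l S - {i}))"
      using rel[rule_format, OF conjI[OF SK(1) conjI[OF SK(3) km]] l] unfolding \<pi>_def a_def .
    have SiK: "insert l S - {i} \<subseteq> {1..m}" for i using SK(1) lK by blast
    have iK: "i \<in> S \<Longrightarrow> i \<in> {1..m}" for i using SK(1) by blast
    have bxS: "PiE {1..m} (bx S) \<in> sets (cube_lebesgue m)"
    proof -
      have "PiE {1..m} (bx S) \<in> sets (PP {1..m})" using bxU by (intro box_sets) auto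
      then show ?thesis unfolding cube_def' by simp
    qed
    have swi: "integrable (cube_lebesgue m) (\<lambda>x. F (insert l S - {i}) (x(l := x i, i := x l)))" if "i \<in> S" for i
      by (rule swap_integrable[OF Fint[OF SiK] lK(1) iK[OF that]])
    have "K S / \<pi> S = set_lebesgue_integral (cube_lebesgue m) (PiE {1..m} (bx S)) (\<lambda>x. F S x / \<pi> S)"
      unfolding K_def SI_def by (rule setint_divide[symmetric])
    also have "\<dots> = set_lebesgue_integral (cube_lebesgue m) (PiE {1..m} (bx S))
        (\<lambda>x. \<Sum>i\<in>S. F (insert l S - {i}) (x(l := x i, i := x l)) / \<pi> (insert l S - {i}))"
      unfolding set_lebesgue_integral_def
    proof (rule integral_cong_AE)
      show "(\<lambda>x. indicator (PiE {1..m} (bx S)) x *\<^sub>R (F S x / \<pi> S)) \<in> borel_measurable (cube_lebesgue m)"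
        using Fint[OF SK(1)] bxS by (intro borel_measurable_scaleR borel_measurable_indicator borel_measurable_divide) auto
      show "(\<lambda>x. indicator (PiE {1..m} (bx S)) x *\<^sub>R (\<Sum>i\<in>S. F (insert l S - {i}) (x(l := x i, i := x l)) / \<pi> (insert l S - {i})))
          \<in> borel_measurable (cube_lebesgue m)"
        using swi bxS by (intro borel_measurable_scaleR borel_measurable_indicator borel_measurable_sum borel_measurable_divide) auto
      show "AE x in cube_lebesgue m. indicator (PiE {1..m} (bx S)) x *\<^sub>R (F S x / \<pi> S) =
          indicator (PiE {1..m} (bx S)) x *\<^sub>R (\<Sum>i\<in>S. F (insert l S - {i}) (x(l := x i, i := x l)) / \<pi> (insert l S - {i}))"
        using relS by (rule AE_mp) (rule AE_I2, simp)
    qed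
    also have "\<dots> = (\<Sum>i\<in>S. set_lebesgue_integral (cube_lebesgue m) (PiE {1..m} (bx S))
        (\<lambda>x. F (insert l S - {i}) (x(l := x i, i := x l))) / \<pi> (insert l S - {i}))"
    proof -
      have "set_lebesgue_integral (cube_lebesgue m) (PiE {1..m} (bx S))
        (\<lambda>x. \<Sum>i\<in>S. F (insert l S - {i}) (x(l := x i, i := x l)) / \<pi> (insert l S - {i}))
        = (\<Sum>i\<in>S. set_lebesgue_integral (cube_lebesgue m) (PiE {1..m} (bx S))
           (\<lambda>x. F (insert l S - {i}) (x(l := x i, i := x l)) / \<pi> (insert l S - {i})))"
        unfolding set_lebesgue_integral_def scaleR_sum_right
        by (rule Bochner_Integration.integral_sum) (intro integrable_mult_indicator bxS integrable_divide_zero swi)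
      then show ?thesis by (simp only: setint_divide)
    qed
    also have "\<dots> = (\<Sum>i\<in>S. Mv (insert l S - {i}) l i / \<pi> (insert l S - {i}))"
    proof (rule sum.cong[OF refl])
      fix i assume i: "i \<in> S"
      have eq: "(bx S)(l := bx S i, i := bx S l) = (bx (insert l S - {i}))(l := A i)"
        using i lK by (auto simp: bx_def fun_eq_iff)
      have "set_lebesgue_integral (cube_lebesgue m) (PiE {1..m} (bx S)) (\<lambda>x. F (insert l S - {i}) (x(l := x i, i := x l)))
         = Mv (insert l S - {i}) l i"
        unfolding Mv_def SI_def eq[symmetric] by (rule swap_setint[OF Fint[OF SiK] lK(1) iK[OF i] bxU])
      then show "set_lebesgue_integral (cube_lebesgue m) (PiE {1..m} (bx S)) (\<lambda>x. F (insert l S - {i}) (x(l := x i, i := x l))) / \<pi> (insert l S - {i})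
         = Mv (insert l S - {i}) l i / \<pi> (insert l S - {i})" by simp
    qed
    finally show ?thesis .
  qed

  define W where "W S = K S / \<pi> S" for S
  have tot: "(\<Sum>l\<in>{1..m}-S. a l) + (\<Sum>l\<in>S. a l) = 1" if "S \<in> SS" for S
  proof -
    have "(\<Sum>l\<in>{1..m}. a l) = (\<Sum>l\<in>{1..m}-S. a l) + (\<Sum>l\<in>S. a l)"
      by (rule sum.subset_diff[OF SSD(1)[OF that]]) simp
    moreover have "(\<Sum>l\<in>{1..m}. a l) = 1" using alpha_sum unfolding a_def by (metis of_real_1 of_real_sum)
    ultimately show ?thesis by simp
  qed
  have s1: "(\<Sum>l\<in>{1..m}-S. a l) * W S = (\<Sum>l\<in>{1..m}-S. \<Sum>i\<in>S. a l * (Mv (insert l S - {i}) l i / \<pi> (insert l S - {i})))"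
    if S: "S \<in> SS" for S
  proof -
    have "(\<Sum>l\<in>{1..m}-S. a l) * W S = (\<Sum>l\<in>{1..m}-S. a l * W S)" by (rule sum_distrib_right)
    also have "\<dots> = (\<Sum>l\<in>{1..m}-S. a l * (\<Sum>i\<in>S. Mv (insert l S - {i}) l i / \<pi> (insert l S - {i})))"
      by (rule sum.cong[OF refl]) (simp add: W_def R[OF S])
    also have "\<dots> = (\<Sum>l\<in>{1..m}-S. \<Sum>i\<in>S. a l * (Mv (insert l S - {i}) l i / \<pi> (insert l S - {i})))"
      by (simp only: sum_distrib_left)
    finally show ?thesis .
  qed
  have s3: "(\<Sum>p\<in>T. \<Sum>q\<in>{1..m}-T. a p * (Mv T p q / \<pi> T)) = - ((\<Sum>p\<in>T. a p) * W T)"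
    if T: "T \<in> SS" for T
  proof -
    have "(\<Sum>p\<in>T. \<Sum>q\<in>{1..m}-T. a p * (Mv T p q / \<pi> T)) = (\<Sum>p\<in>T. a p * ((\<Sum>q\<in>{1..m}-T. Mv T p q) / \<pi> T))"
      by (simp only: sum_distrib_left sum_divide_distrib)
    also have "\<dots> = (\<Sum>p\<in>T. a p * (- K T / \<pi> T))"
      by (rule sum.cong[OF refl]) (simp add: V[OF T])
    also have "\<dots> = (\<Sum>p\<in>T. a p) * (- K T / \<pi> T)"
      by (simp only: sum_distrib_right[symmetric])
    also have "\<dots> = - ((\<Sum>p\<in>T. a p) * W T)"
      by (simp add: W_def)
    finally show ?thesis .
  qed
  have Z: "(\<Sum>S\<in>SS. W S) = 0"
  proof -
    have "(\<Sum>S\<in>SS. (\<Sum>l\<in>{1..m}-S. a l) * W S)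
        = (\<Sum>S\<in>SS. \<Sum>l\<in>{1..m}-S. \<Sum>i\<in>S. a l * (Mv (insert l S - {i}) l i / \<pi> (insert l S - {i})))"
      by (rule sum.cong[OF refl]) (rule s1)
    also have "\<dots> = (\<Sum>T\<in>SS. \<Sum>p\<in>T. \<Sum>q\<in>{1..m}-T. a p * (Mv T p q / \<pi> T))"
      unfolding SS_def by (rule triple_reindex[where h="\<lambda>T p q. a p * (Mv T p q / \<pi> T)"]) simp
    also have "\<dots> = (\<Sum>T\<in>SS. - ((\<Sum>p\<in>T. a p) * W T))"
      by (rule sum.cong[OF refl]) (rule s3)
    finally have e: "(\<Sum>S\<in>SS. (\<Sum>l\<in>{1..m}-S. a l) * W S) + (\<Sum>S\<in>SS. (\<Sum>p\<in>S. a p) * W S) = 0"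
      by (simp add: sum_negf)
    have "(\<Sum>S\<in>SS. W S) = (\<Sum>S\<in>SS. ((\<Sum>l\<in>{1..m}-S. a l) + (\<Sum>l\<in>S. a l)) * W S)"
      by (rule sum.cong[OF refl]) (simp only: tot mult_1_left)
    also have "\<dots> = (\<Sum>S\<in>SS. (\<Sum>l\<in>{1..m}-S. a l) * W S) + (\<Sum>S\<in>SS. (\<Sum>p\<in>S. a p) * W S)"
      by (simp add: distrib_right sum.distrib)
    finally show ?thesis using e by simp
  qed

  have XA: "PiE {1..m} A \<in> sets (cube_lebesgue m)"
  proof -
    have "PiE {1..m} A \<in> sets (PP {1..m})" using AU by (intro box_sets) auto
    then show ?thesis unfolding cube_def' by simp
  qed
  have "set_lebesgue_integral (cube_lebesgue m) (PiE {1..m} A) (\<lambda>x. \<Sum>S\<in>SS. F S x) = (\<Sum>S\<in>SS. SI S A)"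
    unfolding set_lebesgue_integral_def scaleR_sum_right SI_def
    by (rule Bochner_Integration.integral_sum) (intro integrable_mult_indicator XA Fint, use SSD in blast)
  also have "\<dots> = (\<Sum>S\<in>SS. (\<Prod>j\<in>{1..m}. a j) * W S)"
  proof (rule sum.cong[OF refl])
    fix S assume S: "S \<in> SS"
    have "(\<Prod>j\<in>{1..m}. a j) = (\<Prod>j\<in>{1..m}-S. a j) * \<pi> S"
      unfolding \<pi>_def by (rule prod.subset_diff[OF SSD(1)[OF S]]) simp
    then show "SI S A = (\<Prod>j\<in>{1..m}. a j) * W S"
      using pinz[OF SSD(1)[OF S]] by (simp add: E[OF S] W_def)
  qed
  also have "\<dots> = (\<Prod>j\<in>{1..m}. a j) * (\<Sum>S\<in>SS. W S)" by (simp add: sum_distrib_left)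
  also have "\<dots> = 0" by (simp add: Z)
  finally show "set_lebesgue_integral (cube_lebesgue m) (PiE {1..m} A)
       (\<lambda>x. \<Sum>S\<in>{S. S \<subseteq> {1..m} \<and> card S = k}. F S x) = 0" unfolding SS_def .
qed

end
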